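(* Let $ABC$ be a triangle with $\angle A\neq 90^\circ$. Then the points $S_A$ and $M_A$ are isogonal conjugates with respect to triangle $ABC$.
   Context: $O$ is the circumcenter of $ABC$. The symmedian from $A$ is the reflection of the median $AE$ ($E$ the midpoint of $BC$) in the bisector of angle $A$. $S_A$ is the unique point with $\angle BS_AC=2\angle A$ and $\angle CS_AA=\angle AS_AB=180^\circ-\angle A$ (directed angles); it is the point where the ray from $A$ along the symmedian from $A$ meets the arc $BC$ of the circle through $B$, $C$, $O$ that contains $O$. The point $M_A$: if $\angle A<90^\circ$, let $F$ be the second intersection of the median line $AE$ with the circumcircle of $ABC$, and $M_A$ the point on segment $AE$ with $EM_A=EF$; if $\angle A>90^\circ$, let $F$ be the point with $ABFC$ a parallelogram, and $M_A$ the second intersection of line $AE$ with the circumcircle of $FBC$. Points $P$ and $Q$ are isogonal conjugates with respect to $ABC$ if $\angle CBQ=\angle PBA$, $\angle BAP=\angle QAC$ and $\angle ACQ=\angle PCB$. *)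

theory Defs
  imports "HOL-Analysis.Analysis"
begin

definition angle_at :: "complex \<Rightarrow> complex \<Rightarrow> complex \<Rightarrow> real" where
  "angle_at X Y Z = arccos (((X - Y) \<bullet> (Z - Y)) / (norm (X - Y) * norm (Z - Y)))"

definition dir_angle :: "complex \<Rightarrow> complex \<Rightarrow> complex \<Rightarrow> real" where
  "dir_angle X Y Z = Arg ((Z - Y) / (X - Y))"

definition dangle_eq :: "real \<Rightarrow> real \<Rightarrow> bool" where
  "dangle_eq a b \<longleftrightarrow> (\<exists>k::int. a - b = of_int k * pi)"

definition circumcenter_pt :: "complex \<Rightarrow> complex \<Rightarrow> complex \<Rightarrow> complex \<Rightarrow> bool" where
  "circumcenter_pt A B C Oc \<longleftrightarrow> dist Oc A = dist Oc B \<and> dist Oc B = dist Oc C"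

definition on_circle3 :: "complex \<Rightarrow> complex \<Rightarrow> complex \<Rightarrow> complex \<Rightarrow> bool" where
  "on_circle3 X Y Z P \<longleftrightarrow>
     (\<exists>c. dist c X = dist c Y \<and> dist c Y = dist c Z \<and> dist c P = dist c X)"

definition on_line :: "complex \<Rightarrow> complex \<Rightarrow> complex \<Rightarrow> bool" where
  "on_line X Y P \<longleftrightarrow> (\<exists>t::real. P = X + of_real t * (Y - X))"

definition same_side :: "complex \<Rightarrow> complex \<Rightarrow> complex \<Rightarrow> complex \<Rightarrow> bool" where
  "same_side X Y P Q \<longleftrightarrow> Im ((P - X) / (Y - X)) * Im ((Q - X) / (Y - X)) > 0"

text \<open>Reflection of vector v in the line through 0 with direction u.\<close>
definition refl_dir :: "complex \<Rightarrow> complex \<Rightarrow> complex" where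
  "refl_dir u v = (u / cnj u) * cnj v"

text \<open>Direction of the symmedian ray from A: reflection of the median vector E - A
  in the internal bisector of angle A.\<close>
definition symmedian_dir :: "complex \<Rightarrow> complex \<Rightarrow> complex \<Rightarrow> complex" where
  "symmedian_dir A B C =
     refl_dir ((B - A) / of_real (norm (B - A)) + (C - A) / of_real (norm (C - A)))
              ((B + C) / 2 - A)"

definition is_S_A :: "complex \<Rightarrow> complex \<Rightarrow> complex \<Rightarrow> complex \<Rightarrow> bool" where
  "is_S_A A B C S \<longleftrightarrow>
     (\<exists>Oc. circumcenter_pt A B C Oc \<and>
        (\<exists>t::real. t > 0 \<and> S = A + of_real t * symmedian_dir A B C) \<and>
        on_circle3 B C Oc S \<and> same_side B C S Oc)"

definition is_M_A :: "complex \<Rightarrow> complex \<Rightarrow> complex \<Rightarrow> complex \<Rightarrow> bool" where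
  "is_M_A A B C M \<longleftrightarrow>
     (let E = (B + C) / 2 in
      (angle_at B A C < pi / 2 \<longrightarrow>
         (\<exists>F. F \<noteq> A \<and> on_line A E F \<and> on_circle3 A B C F \<and>
              M \<in> closed_segment A E \<and> dist E M = dist E F)) \<and>
      (angle_at B A C > pi / 2 \<longrightarrow>
         (let F = B + C - A in
          M \<noteq> F \<and> on_line A E M \<and> on_circle3 F B C M)))"

definition isogonal_conj :: "complex \<Rightarrow> complex \<Rightarrow> complex \<Rightarrow> complex \<Rightarrow> complex \<Rightarrow> bool" where
  "isogonal_conj A B C P Q \<longleftrightarrow>
     dangle_eq (dir_angle C B Q) (dir_angle P B A) \<and>
     dangle_eq (dir_angle B A P) (dir_angle Q A C) \<and>
     dangle_eq (dir_angle A C Q) (dir_angle P C B)"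

end

theory Submission
  imports Defs
begin



lemma dangle_crit:
  assumes "x \<noteq> 0" "y \<noteq> 0" "Im (x * cnj y) = 0"
  shows "dangle_eq (Arg x) (Arg y)"
proof -
  have "Im (x * cnj y) = cmod x * cmod y * sin (Arg x - Arg y)"
    using assms(1,2) by (simp add: sin_diff sin_Arg cos_Arg field_simps)
  then have "sin (Arg x - Arg y) = 0" using assms by simp
  then obtain i :: int where "Arg x - Arg y = of_int i * pi" by (auto simp: sin_zero_iff_int2)
  then show ?thesis unfolding dangle_eq_def by blast
qed

lemma aux: "(a::complex) \<noteq> 0 \<Longrightarrow> e \<noteq> 0 \<Longrightarrow> d \<noteq> 0 \<Longrightarrow> a*c/(d*e) * (e/a) = c/d"
  by (simp add: field_simps)

lemma iso_crit:
  fixes P Q X Y V :: complex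
  assumes "P \<noteq> V" "Q \<noteq> V" "X \<noteq> V" "Y \<noteq> V"
    and "cnj ((P - V) * (Q - V) / ((X - V) * (Y - V))) = (P - V) * (Q - V) / ((X - V) * (Y - V))"
  shows "dangle_eq (Arg ((Q - V) / (X - V))) (Arg ((Y - V) / (P - V)))"
proof (rule dangle_crit)
  let ?Z = "(P - V) * (Q - V) / ((X - V) * (Y - V))"
  let ?y = "(Y - V) / (P - V)"
  have Zr: "Im ?Z = 0" using assms(5) by (metis cnj.sel(2) complex_eq_iff equal_neg_zero)
  have eq: "(Q - V) / (X - V) = ?Z * ?y" using aux[of "P-V" "Y-V" "X-V" "Q-V"] assms(1-4) by simp
  have e1: "(Q - V) / (X - V) * cnj ?y = ?Z * (?y * cnj ?y)" using eq by (metis mult.assoc)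
  have imr: "\<And>z r. Im (z * complex_of_real r) = Im z * r" by simp
  have "Im (?Z * (?y * cnj ?y)) = Im ?Z * (cmod ?y)^2"
    by (simp only: complex_norm_square[symmetric] imr)
  then have "Im (?Z * (?y * cnj ?y)) = 0" using Zr by simp
  then show "Im ((Q - V) / (X - V) * cnj ?y) = 0" using e1 by simp
  show "(Q - V) / (X - V) \<noteq> 0" "?y \<noteq> 0" using assms(1-4) by auto
qed

lemma noncol_X:
  fixes A B C :: complex
  assumes "\<not> collinear {A, B, C}"
  shows "Im (cnj (B - A) * (C - A)) \<noteq> 0"
proof
  assume X: "Im (cnj (B - A) * (C - A)) = 0"
  have "collinear {0, B - A, C - A}"
  proof (cases "B - A = 0")
    case True then show ?thesis by (simp add: collinear_lemma)
  next
    case False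
    have "Im ((C - A) / (B - A)) = 0" using X by (simp add: Im_divide algebra_simps)
    then have r: "(C - A) / (B - A) = of_real (Re ((C - A) / (B - A)))" by (simp add: complex_eq_iff)
    have "C - A = ((C - A) / (B - A)) * (B - A)" using False by simp
    also have "\<dots> = Re ((C - A) / (B - A)) *\<^sub>R (B - A)" by (subst r) (simp add: scaleR_conv_of_real)
    finally have "C - A = Re ((C - A) / (B - A)) *\<^sub>R (B - A)" .
    then show ?thesis unfolding collinear_lemma by blast
  qed
  then have "collinear {B, A, C}" by (subst collinear_3) auto
  then show False using assms by (simp add: insert_commute)
qed




definition cr :: "real \<Rightarrow> real \<Rightarrow> real \<Rightarrow> real \<Rightarrow> real" where
  "cr x1 x2 y1 y2 = x1*y2 - x2*y1"

lemma fact_abs: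
  fixes X nb nc be tt P D Q G1 G2 G3 O2 S2 :: real
  assumes P: "P = nb+nc" and D: "D = nb+nc-2*be" and Q: "Q = nb+nc+2*be" and hX: "X^2 = nb*nc - be^2"
    and h2: "2*X*G2 = tt*nb*nc*(nb-nc) + nb*(nc-be) - 2*tt*nb*X^2"
    and h3: "G3 = -X*(1-tt*P)" and h1: "2*X*G1 = be*D" and h4: "4*X^2*O2 = nb*nc*D"
    and h5: "S2 = tt^2*nb*nc*Q"
    and G: "G2*(nc-nb) + G3*(O2-nb) + G1*(S2-nb) = 0" and Xn: "X \<noteq> 0"
  shows "D*nb*nc*(tt*Q-1)*(be*tt*2-1) = 0"
proof -
  have e: "4*X^2*(G2*(nc-nb) + G3*(O2-nb) + G1*(S2-nb)) =
     X*(2*(2*X*G2)*(nc-nb) - (1-tt*P)*(4*X^2*O2 - 4*X^2*nb) + 2*(2*X*G1)*(S2-nb))"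
    unfolding h3 by algebra
  have "X*(2*(2*X*G2)*(nc-nb) - (1-tt*P)*(4*X^2*O2 - 4*X^2*nb) + 2*(2*X*G1)*(S2-nb)) = 0"
    using e G by simp
  then have b0: "2*(2*X*G2)*(nc-nb) - (1-tt*P)*(4*X^2*O2 - 4*X^2*nb) + 2*(2*X*G1)*(S2-nb) = 0"
    using Xn by simp
  have "2*(2*X*G2)*(nc-nb) - (1-tt*P)*(4*X^2*O2 - 4*X^2*nb) + 2*(2*X*G1)*(S2-nb)
     = 2*(tt*nb*nc*(nb-nc) + nb*(nc-be) - 2*tt*nb*X^2)*(nc-nb) - (1-tt*P)*(nb*nc*D - 4*X^2*nb)
       + 2*(be*D)*(tt^2*nb*nc*Q-nb)" unfolding h2 h1 h4 h5 by simp
  also have "\<dots> = D*nb*nc*(tt*Q-1)*(be*tt*2-1)" unfolding hX P D Q by algebra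
  finally show ?thesis using b0 by simp
qed

lemma core_S:
  fixes b1 b2 c1 c2 ox oy q1 q2 tt :: real
  assumes X: "b1*c2 - b2*c1 \<noteq> 0" and be: "b1*c1+b2*c2 \<noteq> 0"
    and ob: "ox^2+ oy^2 = (ox-b1)^2+(oy-b2)^2" and oc: "(ox-b1)^2+(oy-b2)^2 = (ox-c1)^2+(oy-c2)^2"
    and qa: "(q1-b1)^2+(q2-b2)^2 = (q1-c1)^2+(q2-c2)^2"
    and qb: "(q1-c1)^2+(q2-c2)^2 = (q1-ox)^2+(q2-oy)^2"
    and qc: "(q1- tt*((c1^2+c2^2)*b1+(b1^2+b2^2)*c1))^2+(q2- tt*((c1^2+c2^2)*b2+(b1^2+b2^2)*c2))^2
            = (q1-b1)^2+(q2-b2)^2"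
    and side: "cr (c1-b1) (c2-b2) (tt*((c1^2+c2^2)*b1+(b1^2+b2^2)*c1)-b1) (tt*((c1^2+c2^2)*b2+(b1^2+b2^2)*c2)-b2)
              * cr (c1-b1) (c2-b2) (ox-b1) (oy-b2) > 0"
  shows "tt*((b1+c1)^2+(b2+c2)^2) = 1"
proof -
  define X where "X = b1*c2 - b2*c1"
  define nb where "nb = b1^2+b2^2"
  define nc where "nc = c1^2+c2^2"
  define w1 where "w1 = nc*b1+nb*c1"
  define w2 where "w2 = nc*b2+nb*c2"
  define S1 where "S1 = tt*w1"
  define S2 where "S2 = tt*w2"
  have lb: "2*(ox*b1+ oy*b2) = nb" using ob unfolding nb_def by algebra
  have lc: "2*(ox*c1+ oy*c2) = nc" using ob oc unfolding nc_def by algebra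
  have "2*X* ox = c2*(2*(ox*b1+ oy*b2)) - b2*(2*(ox*c1+ oy*c2))" unfolding X_def by (simp add: algebra_simps)
  also have "\<dots> = nb*c2 - nc*b2" using lb lc by simp
  finally have o1': "2*X* ox = nb*c2 - nc*b2" .
  have "2*X* oy = b1*(2*(ox*c1+ oy*c2)) - c1*(2*(ox*b1+ oy*b2))" unfolding X_def by (simp add: algebra_simps)
  also have "\<dots> = nc*b1 - nb*c1" using lb lc by simp
  finally have o2': "2*X* oy = nc*b1 - nb*c1" .
  have Xn: "X \<noteq> 0" using X unfolding X_def .
  have o1: "ox = (nb*c2 - nc*b2)/(2*X)" using o1' Xn by (simp add: field_simps)
  have o2: "oy = (nc*b1 - nb*c1)/(2*X)" using o2' Xn by (simp add: field_simps)
  have G: "cr (ox-b1) (oy-b2) (S1-b1) (S2-b2) * (nc - nb) + cr (S1-b1) (S2-b2) (c1-b1) (c2-b2) * (ox^2+ oy^2-nb)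
      + cr (c1-b1) (c2-b2) (ox-b1) (oy-b2) * (S1^2+S2^2-nb) = 0"
    using qa qb qc unfolding cr_def S1_def S2_def w1_def w2_def nb_def nc_def by algebra
  define Q where "Q = (b1+c1)^2+(b2+c2)^2"
  define be where "be = b1*c1+b2*c2"
  have Qn: "Q \<noteq> 0"
  proof
    assume "Q = 0"
    then have "b1+c1 = 0" "b2+c2 = 0" unfolding Q_def by (simp_all add: sum_power2_eq_zero_iff)
    then have "b1 = -c1" "b2 = -c2" by linarith+
    then show False using Xn unfolding X_def by (simp add: algebra_simps)
  qed
  define P where "P = nb + nc"
  define D where "D = nb + nc - 2*be"
  have h1: "2*X*cr (c1-b1) (c2-b2) (ox-b1) (oy-b2) = be*D"
  proof -
    have "2*X*cr (c1-b1) (c2-b2) (ox-b1) (oy-b2) = (c1-b1)*(2*X* oy) - (c2-b2)*(2*X* ox) - 2*X*((c1-b1)*b2 - (c2-b2)*b1)"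
      unfolding cr_def by (simp add: algebra_simps)
    also have "\<dots> = (c1-b1)*(nc*b1 - nb*c1) - (c2-b2)*(nb*c2 - nc*b2) - 2*X*((c1-b1)*b2 - (c2-b2)*b1)" by (simp only: o1' o2')
    also have "\<dots> = be*D" unfolding D_def be_def nb_def nc_def X_def by (simp add: algebra_simps power2_eq_square)
    finally show ?thesis .
  qed
  have h2: "2*X*cr (ox-b1) (oy-b2) (S1-b1) (S2-b2) = tt*nb*nc*(nb-nc) + nb*(nc-be) - 2*tt*nb*X^2"
  proof -
    have "2*X*cr (ox-b1) (oy-b2) (S1-b1) (S2-b2) = (2*X* ox)*(S2-b2) - (2*X* oy)*(S1-b1) - 2*X*(b1*(S2-b2) - b2*(S1-b1))"
      unfolding cr_def by (simp add: algebra_simps)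
    also have "\<dots> = (nb*c2 - nc*b2)*(S2-b2) - (nc*b1 - nb*c1)*(S1-b1) - 2*X*(b1*(S2-b2) - b2*(S1-b1))" by (simp only: o1' o2')
    also have "\<dots> = tt*nb*nc*(nb-nc) + nb*(nc-be) - 2*tt*nb*X^2" unfolding S1_def S2_def w1_def w2_def be_def nb_def nc_def X_def by (simp add: algebra_simps power2_eq_square)
    finally show ?thesis .
  qed
  have h3: "cr (S1-b1) (S2-b2) (c1-b1) (c2-b2) = -X*(1 - tt*P)"
    unfolding cr_def S1_def S2_def w1_def w2_def P_def nb_def nc_def X_def by (simp add: algebra_simps power2_eq_square)
  have h4: "4*X^2*(ox^2+ oy^2) = nb*nc*D"
  proof -
    have "4*X^2*(ox^2+ oy^2) = (2*X* ox)^2 + (2*X* oy)^2" by (simp add: algebra_simps power2_eq_square)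
    also have "\<dots> = (nb*c2 - nc*b2)^2 + (nc*b1 - nb*c1)^2" by (simp only: o1' o2')
    also have "\<dots> = nb*nc*D" unfolding D_def be_def nb_def nc_def by (simp add: algebra_simps power2_eq_square)
    finally show ?thesis .
  qed
  have h5: "S1^2+S2^2 = tt^2*nb*nc*Q"
    unfolding S1_def S2_def w1_def w2_def Q_def nb_def nc_def by (simp add: algebra_simps power2_eq_square)
  have hX: "X^2 = nb*nc - be^2" unfolding X_def nb_def nc_def be_def by (simp add: algebra_simps power2_eq_square)
  have r: "D*nb*nc*(tt*Q-1)*(be*tt*2-1) = 0"
    by (rule fact_abs[OF P_def D_def _ hX h2 h3 h1 h4 h5 G Xn]) (simp add: Q_def nb_def nc_def be_def power2_eq_square algebra_simps)
  have Dn: "D \<noteq> 0"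
  proof
    assume "D = 0"
    then have "(b1-c1)^2+(b2-c2)^2 = 0" unfolding D_def nb_def nc_def be_def by (simp add: power2_eq_square algebra_simps)
    then have "b1-c1 = 0" "b2-c2 = 0" by (simp_all add: sum_power2_eq_zero_iff)
    then have "b1 = c1" "b2 = c2" by linarith+
    then show False using Xn unfolding X_def by (simp add: algebra_simps)
  qed
  have nbn: "nb \<noteq> 0"
  proof
    assume "nb = 0"
    then have "b1 = 0" "b2 = 0" unfolding nb_def by (simp_all add: sum_power2_eq_zero_iff)
    then show False using Xn unfolding X_def by simp
  qed
  have ncn: "nc \<noteq> 0"
  proof
    assume "nc = 0"
    then have "c1 = 0" "c2 = 0" unfolding nc_def by (simp_all add: sum_power2_eq_zero_iff)
    then show False using Xn unfolding X_def by simp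
  qed
  have z: "(tt*Q-1)*(be*tt*2-1) = 0" using r Dn nbn ncn by simp
  have "be*tt*2 \<noteq> 1"
  proof
    assume bt: "be*tt*2 = 1"
    have sd: "cr (c1-b1) (c2-b2) (S1-b1) (S2-b2) * cr (c1-b1) (c2-b2) (ox-b1) (oy-b2) > 0"
      using side unfolding S1_def S2_def w1_def w2_def nb_def nc_def .
    have c3: "cr (c1-b1) (c2-b2) (S1-b1) (S2-b2) = X*(1 - tt*P)" using h3 unfolding cr_def by (simp add: algebra_simps)
    have "2*X*(cr (c1-b1) (c2-b2) (S1-b1) (S2-b2) * cr (c1-b1) (c2-b2) (ox-b1) (oy-b2))
       = X*((1 - tt*P)*(be*D))" unfolding c3 using h1 by (simp add: algebra_simps)
    then have "X*(2*(cr (c1-b1) (c2-b2) (S1-b1) (S2-b2) * cr (c1-b1) (c2-b2) (ox-b1) (oy-b2)))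
       = X*((1 - tt*P)*be*D)" by (simp add: algebra_simps)
    then have "2*(cr (c1-b1) (c2-b2) (S1-b1) (S2-b2) * cr (c1-b1) (c2-b2) (ox-b1) (oy-b2))
       = (1 - tt*P)*be*D" using Xn by (simp only: mult_cancel_left) simp
    also have "(1 - tt*P)*be = be - (be*tt*2)*P/2" by (simp add: algebra_simps)
    also have "\<dots> = -D/2" unfolding bt P_def D_def by (simp add: algebra_simps)
    finally have "2*(cr (c1-b1) (c2-b2) (S1-b1) (S2-b2) * cr (c1-b1) (c2-b2) (ox-b1) (oy-b2)) = -(D*D)/2" by simp
    moreover have "D*D \<ge> 0" by simp
    ultimately show False using sd by linarith
  qed
  then show ?thesis using z unfolding Q_def be_def by simp
qed



lemma core_M_acute:
  fixes b1 b2 c1 c2 q1 q2 r lam :: real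
  assumes Qn: "(b1+c1)^2+(b2+c2)^2 \<noteq> 0"
    and qb: "q1^2+q2^2 = (q1-b1)^2+(q2-b2)^2" and qc: "(q1-b1)^2+(q2-b2)^2 = (q1-c1)^2+(q2-c2)^2"
    and qF: "(q1 - r*((b1+c1)/2))^2 + (q2 - r*((b2+c2)/2))^2 = q1^2+q2^2" and rn: "r \<noteq> 0"
    and d: "\<bar>1 - lam\<bar> = \<bar>1 - r\<bar>" and l1: "lam \<le> 1"
  shows "lam*((b1+c1)^2+(b2+c2)^2) = 4*(b1*c1+b2*c2)"
proof -
  define Q where "Q = (b1+c1)^2+(b2+c2)^2"
  have lb: "2*(q1*b1+q2*b2) = b1^2+b2^2" using qb by algebra
  have lc: "2*(q1*c1+q2*c2) = c1^2+c2^2" using qb qc by algebra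
  have "r*(r*Q - 4*(q1*(b1+c1)+q2*(b2+c2))) = 0" using qF unfolding Q_def by algebra
  then have "r*Q = 4*(q1*(b1+c1)+q2*(b2+c2))" using rn by simp
  also have "\<dots> = 2*(2*(q1*b1+q2*b2)) + 2*(2*(q1*c1+q2*c2))" by (simp add: algebra_simps)
  finally have rQ: "r*Q = 2*(b1^2+b2^2) + 2*(c1^2+c2^2)" unfolding lb lc .
  have Qp: "Q > 0" using Qn unfolding Q_def by (simp add: add_pos_pos sum_power2_gt_zero_iff)
  have "r*Q - Q = 2*(b1^2+b2^2) + 2*(c1^2+c2^2) - Q" using rQ by simp
  also have "\<dots> = (b1-c1)^2+(b2-c2)^2" unfolding Q_def by (simp add: power2_eq_square algebra_simps)
  finally have "r*Q - Q = (b1-c1)^2+(b2-c2)^2" .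
  then have "(r - 1)*Q \<ge> 0" by (simp add: algebra_simps)
  then have "r \<ge> 1" using Qp by (simp add: zero_le_mult_iff)
  then have "1 - lam = r - 1" using d l1 by simp
  then have "lam = 2 - r" by simp
  then have "lam*Q = 2*Q - r*Q" by (simp add: left_diff_distrib)
  also have "\<dots> = 2*Q - (2*(b1^2+b2^2) + 2*(c1^2+c2^2))" using rQ by simp
  also have "\<dots> = 4*(b1*c1+b2*c2)" unfolding Q_def by (simp add: power2_eq_square algebra_simps)
  finally show ?thesis unfolding Q_def .
qed

lemma core_M_obtuse:
  fixes b1 b2 c1 c2 q1 q2 lam :: real
  assumes Qn: "(b1+c1)^2+(b2+c2)^2 \<noteq> 0"
    and qF: "(q1-(b1+c1))^2+(q2-(b2+c2))^2 = (q1-b1)^2+(q2-b2)^2"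
    and qc: "(q1-b1)^2+(q2-b2)^2 = (q1-c1)^2+(q2-c2)^2"
    and qM: "(q1 - lam*((b1+c1)/2))^2 + (q2 - lam*((b2+c2)/2))^2 = (q1-(b1+c1))^2+(q2-(b2+c2))^2"
    and ln: "lam \<noteq> 2"
  shows "lam*((b1+c1)^2+(b2+c2)^2) = 4*(b1*c1+b2*c2)"
proof -
  define Q where "Q = (b1+c1)^2+(b2+c2)^2"
  have lc: "2*(q1*c1+q2*c2) = 2*(b1*c1+b2*c2) + (c1^2+c2^2)" using qF by algebra
  have lb: "2*(q1*b1+q2*b2) = 2*(b1*c1+b2*c2) + (b1^2+b2^2)" using qF qc by algebra
  have "(lam - 2)*((lam+2)*Q - 4*(q1*(b1+c1)+q2*(b2+c2))) = 0" using qM unfolding Q_def by algebra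
  then have "(lam+2)*Q = 4*(q1*(b1+c1)+q2*(b2+c2))" using ln by simp
  also have "\<dots> = 2*(2*(q1*b1+q2*b2)) + 2*(2*(q1*c1+q2*c2))" by (simp add: algebra_simps)
  finally have e: "(lam+2)*Q = 2*(2*(b1*c1+b2*c2) + (b1^2+b2^2)) + 2*(2*(b1*c1+b2*c2) + (c1^2+c2^2))" unfolding lb lc .
  have "lam*Q = (lam+2)*Q - 2*Q" by (simp add: algebra_simps)
  also have "\<dots> = 2*(2*(b1*c1+b2*c2) + (b1^2+b2^2)) + 2*(2*(b1*c1+b2*c2) + (c1^2+c2^2)) - 2*Q" using e by simp
  also have "\<dots> = 4*(b1*c1+b2*c2)" unfolding Q_def by (simp add: power2_eq_square algebra_simps)
  finally show ?thesis unfolding Q_def .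
qed



lemma sym_dir:
  fixes A B C :: complex
  assumes b0: "B - A \<noteq> 0" and c0: "C - A \<noteq> 0"
  shows "\<exists>k::real. symmedian_dir A B C = of_real k *
     (of_real ((cmod (C - A))^2) * (B - A) + of_real ((cmod (B - A))^2) * (C - A))"
proof -
  define b where "b = B - A"
  define c where "c = C - A"
  define nb where "nb = complex_of_real (cmod b)"
  define nc where "nc = complex_of_real (cmod c)"
  define v where "v = b*nc + c*nb"
  have nb0: "nb \<noteq> 0" and nc0: "nc \<noteq> 0" using b0 c0 unfolding nb_def nc_def b_def c_def by auto
  have nb2: "nb^2 = b * cnj b" unfolding nb_def using complex_norm_square[of b] by simp
  have nc2: "nc^2 = c * cnj c" unfolding nc_def using complex_norm_square[of c] by simp
  have cnb: "cnj nb = nb" and cnc: "cnj nc = nc" unfolding nb_def nc_def by simp_all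
  have u: "(B - A) / of_real (norm (B - A)) + (C - A) / of_real (norm (C - A)) = v / (nb*nc)"
    unfolding v_def nb_def nc_def b_def c_def using nb0 nc0 unfolding nb_def nc_def b_def c_def
    by (simp add: field_simps)
  have w: "of_real ((cmod (C - A))^2) * (B - A) + of_real ((cmod (B - A))^2) * (C - A) = nc^2*b + nb^2*c"
    unfolding nb_def nc_def b_def c_def by simp
  have e: "(B + C)/2 - A = (b + c)/2" unfolding b_def c_def by (simp add: field_simps)
  have d: "symmedian_dir A B C = (v/(nb*nc)) / cnj (v/(nb*nc)) * cnj ((b + c)/2)"
    unfolding symmedian_dir_def refl_dir_def u e by simp
  show ?thesis
  proof (cases "v = 0")
    case True
    then show ?thesis unfolding d by (intro exI[of _ 0]) simp
  next
    case False
    define rho where "rho = 2 * Re (b * cnj c) + 2 * cmod b * cmod c"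
    have rho: "complex_of_real rho = b * cnj c + c * cnj b + 2*nb*nc"
      unfolding rho_def nb_def nc_def using complex_add_cnj[of "b * cnj c"] by (simp add: mult.commute)
    have vv: "v * v = b * c * complex_of_real rho"
      unfolding rho v_def using nb2 nc2 by algebra
    have vc: "v * cnj v = complex_of_real ((cmod v)^2)" using complex_norm_square[of v] by simp
    have cv0: "cnj v \<noteq> 0" using False by simp
    have "symmedian_dir A B C = v / cnj v * cnj ((b + c)/2)"
      unfolding d using nb0 nc0 by (simp add: cnb cnc field_simps)
    also have "\<dots> = (v * v) * cnj ((b + c)/2) / (v * cnj v)" using False cv0 by (simp add: field_simps)
    also have "\<dots> = complex_of_real (rho / (2 * (cmod v)^2)) * (nc^2*b + nb^2*c)"
      unfolding vv vc[symmetric] using False cv0 nb2 nc2 complex_norm_square[of v] by (simp add: field_simps)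
    finally show ?thesis unfolding w by blast
  qed
qed




lemma gen_Z: "(d::complex) \<noteq> 0 \<Longrightarrow> b \<noteq> 0 \<Longrightarrow> p \<noteq> 0 \<Longrightarrow> r \<noteq> 0 \<Longrightarrow>
   (-(b*b)/p) * (q*d/r) / (d*(0-b)) = b*q/(p*r)"
  by (simp add: field_simps)

lemma gen_Z2: "(d::complex) \<noteq> 0 \<Longrightarrow> c \<noteq> 0 \<Longrightarrow> p \<noteq> 0 \<Longrightarrow> r \<noteq> 0 \<Longrightarrow>
   (-(c*c)/p) * (q*d/r) / ((0-c)*d) = c*q/(p*r)"
  by (simp add: field_simps)

lemma gen_Z3: "(b::complex) \<noteq> 0 \<Longrightarrow> c \<noteq> 0 \<Longrightarrow> p \<noteq> 0 \<Longrightarrow> r \<noteq> 0 \<Longrightarrow>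
   (m/r - 0) * (b*c/p - 0) / ((b - 0)*(c - 0)) = m/(p*r)"
  by (simp add: field_simps)

lemma final_Z:
  fixes b c :: complex
  assumes b0: "b \<noteq> 0" and c0: "c \<noteq> 0" and bc: "b + c \<noteq> 0" and bmc: "b \<noteq> c"
    and be: "cnj b * c + b * cnj c \<noteq> 0"
  shows "(b*c/(b+c) - b) * ((cnj b * c + b * cnj c)/(cnj b + cnj c) - b) / ((c - b) * (0 - b))
           = b * cnj b / ((b + c) * (cnj b + cnj c))"
    and "(b*c/(b+c) - c) * ((cnj b * c + b * cnj c)/(cnj b + cnj c) - c) / ((0 - c) * (b - c))
           = c * cnj c / ((b + c) * (cnj b + cnj c))"
    and "((cnj b * c + b * cnj c)/(cnj b + cnj c) - 0) * (b*c/(b+c) - 0) / ((b - 0) * (c - 0))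
           = (cnj b * c + b * cnj c) / ((b + c) * (cnj b + cnj c))"
proof -
  have cbc: "cnj b + cnj c \<noteq> 0" using bc by (metis complex_cnj_add complex_cnj_zero_iff)
  have cmb: "c - b \<noteq> 0" using bmc by simp
  have sb: "b*c/(b+c) - b = -(b*b)/(b+c)" using bc by (simp add: field_simps)
  have mb: "(cnj b * c + b * cnj c)/(cnj b + cnj c) - b = cnj b * (c - b)/(cnj b + cnj c)"
    using cbc by (simp add: field_simps)
  have sc: "b*c/(b+c) - c = -(c*c)/(b+c)" using bc by (simp add: field_simps)
  have mc: "(cnj b * c + b * cnj c)/(cnj b + cnj c) - c = cnj c * (b - c)/(cnj b + cnj c)"
    using cbc by (simp add: field_simps)
  have bmc': "b - c \<noteq> 0" using bmc by simp
  show "(b*c/(b+c) - b) * ((cnj b * c + b * cnj c)/(cnj b + cnj c) - b) / ((c - b) * (0 - b))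
           = b * cnj b / ((b + c) * (cnj b + cnj c))"
    unfolding sb mb using gen_Z[OF cmb b0 bc cbc] by simp
  show "(b*c/(b+c) - c) * ((cnj b * c + b * cnj c)/(cnj b + cnj c) - c) / ((0 - c) * (b - c))
           = c * cnj c / ((b + c) * (cnj b + cnj c))"
    unfolding sc mc using gen_Z2[OF bmc' c0 bc cbc] by simp
  show "((cnj b * c + b * cnj c)/(cnj b + cnj c) - 0) * (b*c/(b+c) - 0) / ((b - 0) * (c - 0))
           = (cnj b * c + b * cnj c) / ((b + c) * (cnj b + cnj c))"
    using gen_Z3[OF b0 c0 bc cbc] .
qed





lemma dist_sq: "dist (P::complex) U = dist P V \<Longrightarrow>
   (Re P - Re U)^2 + (Im P - Im U)^2 = (Re P - Re V)^2 + (Im P - Im V)^2"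
  by (simp add: dist_norm cmod_def)

lemma frac_prod_pos: "(x/d)*(y/d) > 0 \<Longrightarrow> x*y > (0::real)"
proof (rule ccontr)
  assume h: "(x/d)*(y/d) > 0" and n: "\<not> x*y > 0"
  have "(x/d)*(y/d) = (x*y)/(d*d)" by simp
  also have "\<dots> \<le> 0" using n by (intro divide_nonpos_nonneg) auto
  finally show False using h by simp
qed

lemma gen_half: "(p::complex) \<noteq> 0 \<Longrightarrow> cp \<noteq> 0 \<Longrightarrow> 2*N/(p*cp)*(p/2) = N/cp"
  by (simp add: field_simps)

lemma final_iso:
  fixes A B C S M :: complex
  assumes b0: "B - A \<noteq> 0" and c0: "C - A \<noteq> 0" and bc: "(B - A) + (C - A) \<noteq> 0"
    and bmc: "B - A \<noteq> C - A"
    and be: "cnj (B - A) * (C - A) + (B - A) * cnj (C - A) \<noteq> 0"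
    and hS: "S = A + (B - A) * (C - A) / ((B - A) + (C - A))"
    and hM: "M = A + (cnj (B - A) * (C - A) + (B - A) * cnj (C - A)) / (cnj (B - A) + cnj (C - A))"
  shows "isogonal_conj A B C S M"
proof -
  define b where "b = B - A"
  define c where "c = C - A"
  define m where "m = (cnj b * c + b * cnj c) / (cnj b + cnj c)"
  have b0': "b \<noteq> 0" and c0': "c \<noteq> 0" and bc': "b + c \<noteq> 0" and bmc': "b \<noteq> c"
    and be': "cnj b * c + b * cnj c \<noteq> 0" using assms unfolding b_def c_def by auto
  have cbc: "cnj b + cnj c \<noteq> 0" using bc' by (metis complex_cnj_add complex_cnj_zero_iff)
  have SA: "S - A = b*c/(b+c) - 0" and SB: "S - B = b*c/(b+c) - b" and SC: "S - C = b*c/(b+c) - c"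
    using hS unfolding b_def c_def by (simp_all add: algebra_simps)
  have MA: "M - A = m - 0" and MB: "M - B = m - b" and MC: "M - C = m - c"
    using hM unfolding m_def b_def c_def by (simp_all add: algebra_simps)
  have BA: "B - A = b - 0" and CA: "C - A = c - 0" and CB: "C - B = c - b" and AB: "A - B = 0 - b"
    and AC: "A - C = 0 - c" and BC: "B - C = b - c" unfolding b_def c_def by (simp_all add: algebra_simps)
  have sb: "b*c/(b+c) - b = -(b*b)/(b+c)" using bc' by (simp add: field_simps)
  have mb: "m - b = cnj b * (c - b)/(cnj b + cnj c)"
    unfolding m_def using cbc by (simp add: field_simps)
  have sc: "b*c/(b+c) - c = -(c*c)/(b+c)" using bc' by (simp add: field_simps)
  have mc: "m - c = cnj c * (b - c)/(cnj b + cnj c)"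
    unfolding m_def using cbc by (simp add: field_simps)
  have nSA: "S \<noteq> A" using SA b0' c0' bc' by auto
  have nSB: "S \<noteq> B" using SB sb b0' bc' by auto
  have nSC: "S \<noteq> C" using SC sc c0' bc' by auto
  have nMA: "M \<noteq> A" using MA be' cbc unfolding m_def by auto
  have nMB: "M \<noteq> B" using MB mb bmc' b0' cbc by auto
  have nMC: "M \<noteq> C" using MC mc bmc' c0' cbc by auto
  have nAB: "A \<noteq> B" "C \<noteq> B" "A \<noteq> C" "B \<noteq> C" using b0 c0 bmc by auto
  have Zs: "(S - B) * (M - B) / ((C - B) * (A - B)) = b * cnj b / ((b + c) * (cnj b + cnj c))"
    "(S - C) * (M - C) / ((A - C) * (B - C)) = c * cnj c / ((b + c) * (cnj b + cnj c))"
    "(M - A) * (S - A) / ((B - A) * (C - A)) = (cnj b * c + b * cnj c) / ((b + c) * (cnj b + cnj c))"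
    unfolding SA SB SC MA MB MC BA CA CB AB AC BC m_def using final_Z[OF b0' c0' bc' bmc' be'] by auto
  have r1: "cnj (b * cnj b / ((b + c) * (cnj b + cnj c))) = b * cnj b / ((b + c) * (cnj b + cnj c))"
    by (simp add: mult.commute)
  have r2: "cnj (c * cnj c / ((b + c) * (cnj b + cnj c))) = c * cnj c / ((b + c) * (cnj b + cnj c))"
    by (simp add: mult.commute)
  have r3: "cnj ((cnj b * c + b * cnj c) / ((b + c) * (cnj b + cnj c))) = (cnj b * c + b * cnj c) / ((b + c) * (cnj b + cnj c))"
    by (simp add: mult.commute add.commute)
  have i1: "dangle_eq (dir_angle C B M) (dir_angle S B A)"
    unfolding dir_angle_def
    by (rule iso_crit) (use nSB nMB nAB Zs(1) r1 in auto)
  have i2: "dangle_eq (dir_angle B A S) (dir_angle M A C)"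
    unfolding dir_angle_def
    by (rule iso_crit) (use nSA nMA nAB Zs(3) r3 in auto)
  have i3: "dangle_eq (dir_angle A C M) (dir_angle S C B)"
    unfolding dir_angle_def
    by (rule iso_crit) (use nSC nMC nAB Zs(2) r2 in auto)
  show ?thesis unfolding isogonal_conj_def using i1 i2 i3 by blast
qed


theorem theorem12:
  fixes A B C S M :: complex
  assumes "\<not> collinear {A, B, C}"
    and "angle_at B A C \<noteq> pi / 2"
    and "is_S_A A B C S"
    and "is_M_A A B C M"
  shows "isogonal_conj A B C S M"
proof -
  define b where "b = B - A"
  define c where "c = C - A"
  define b1 where "b1 = Re B - Re A"
  define b2 where "b2 = Im B - Im A"
  define c1 where "c1 = Re C - Re A"
  define c2 where "c2 = Im C - Im A"
  define Q where "Q = (b1+c1)^2+(b2+c2)^2"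
  have sub: "\<And>x y a :: real. x - a - (y - a) = x - y" by simp
  have Xn: "b1*c2 - b2*c1 \<noteq> 0" using noncol_X[OF assms(1)] unfolding b1_def b2_def c1_def c2_def
    by (simp add: algebra_simps)
  have b0: "B - A \<noteq> 0"
  proof
    assume "B - A = 0" then have "b1 = 0" "b2 = 0" unfolding b1_def b2_def by (simp_all add: complex_eq_iff)
    then show False using Xn by simp
  qed
  have c0: "C - A \<noteq> 0"
  proof
    assume "C - A = 0" then have "c1 = 0" "c2 = 0" unfolding c1_def c2_def by (simp_all add: complex_eq_iff)
    then show False using Xn by simp
  qed
  have bc0: "(B - A) + (C - A) \<noteq> 0"
  proof
    assume "(B - A) + (C - A) = 0"
    then have "c1 = - b1" "c2 = - b2" unfolding c1_def c2_def b1_def b2_def by (simp_all add: complex_eq_iff algebra_simps)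
    then show False using Xn by (simp add: algebra_simps)
  qed
  have bmc: "B - A \<noteq> C - A"
  proof
    assume "B - A = C - A"
    then have "c1 = b1" "c2 = b2" unfolding c1_def c2_def b1_def b2_def by (simp_all add: complex_eq_iff algebra_simps)
    then show False using Xn by (simp add: algebra_simps)
  qed
  have be: "b1*c1+b2*c2 \<noteq> 0"
  proof
    assume h: "b1*c1+b2*c2 = 0"
    have "(B - A) \<bullet> (C - A) = 0" using h unfolding inner_complex_def b1_def b2_def c1_def c2_def by simp
    then have "angle_at B A C = pi/2" unfolding angle_at_def by simp
    then show False using assms(2) by simp
  qed
  have Qn: "Q \<noteq> 0"
  proof
    assume "Q = 0"
    then have "b1+c1 = 0" "b2+c2 = 0" unfolding Q_def by (simp_all add: sum_power2_eq_zero_iff)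
    then have "c1 = - b1" "c2 = - b2" by linarith+
    then show False using Xn by (simp add: algebra_simps)
  qed
  have QQ: "complex_of_real Q = ((B - A) + (C - A)) * cnj ((B - A) + (C - A))"
    unfolding Q_def b1_def b2_def c1_def c2_def
    using complex_norm_square[of "(B - A) + (C - A)"] by (simp add: cmod_power2 algebra_simps)
  have BE: "complex_of_real (2*(b1*c1+b2*c2)) = cnj (B - A) * (C - A) + (B - A) * cnj (C - A)"
    using complex_add_cnj[of "cnj (B - A) * (C - A)"] unfolding b1_def b2_def c1_def c2_def
    by (simp add: algebra_simps)
  have cbc: "cnj (B - A) + cnj (C - A) \<noteq> 0" using bc0 by (metis complex_cnj_add complex_cnj_zero_iff)
  have bcc: "(B - A) + (C - A) \<noteq> 0" using bc0 .

  from assms(3) obtain Oc tS where circ: "circumcenter_pt A B C Oc"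
    and Sdef: "S = A + of_real tS * symmedian_dir A B C"
    and onc: "on_circle3 B C Oc S" and ss: "same_side B C S Oc"
    unfolding is_S_A_def by blast
  obtain k where k: "symmedian_dir A B C = of_real k *
     (of_real ((cmod (C - A))^2) * (B - A) + of_real ((cmod (B - A))^2) * (C - A))"
    using sym_dir[OF b0 c0] by blast
  define tt where "tt = tS * k"
  have Sc: "S = A + of_real tt * (of_real ((cmod (C - A))^2) * (B - A) + of_real ((cmod (B - A))^2) * (C - A))"
    unfolding Sdef k tt_def by simp
  have S1: "Re S - Re A = tt*((c1^2+c2^2)*b1+(b1^2+b2^2)*c1)"
    unfolding Sc b1_def b2_def c1_def c2_def by (simp add: cmod_power2)
  have S2: "Im S - Im A = tt*((c1^2+c2^2)*b2+(b1^2+b2^2)*c2)"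
    unfolding Sc b1_def b2_def c1_def c2_def by (simp add: cmod_power2)
  from circ have d1: "dist Oc A = dist Oc B" "dist Oc B = dist Oc C" unfolding circumcenter_pt_def by auto
  from onc obtain q where q: "dist q B = dist q C" "dist q C = dist q Oc" "dist q S = dist q B"
    unfolding on_circle3_def by blast
  define ox where "ox = Re Oc - Re A"
  define oy where "oy = Im Oc - Im A"
  define q1 where "q1 = Re q - Re A"
  define q2 where "q2 = Im q - Im A"
  have e1: "Re Oc - Re B = ox - b1" "Im Oc - Im B = oy - b2" "Re Oc - Re C = ox - c1" "Im Oc - Im C = oy - c2"
    "Re q - Re B = q1 - b1" "Im q - Im B = q2 - b2" "Re q - Re C = q1 - c1" "Im q - Im C = q2 - c2"
    "Re q - Re Oc = q1 - ox" "Im q - Im Oc = q2 - oy"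
    "Re Oc - Re A = ox" "Im Oc - Im A = oy"
    unfolding ox_def oy_def q1_def q2_def b1_def b2_def c1_def c2_def by (simp_all add: algebra_simps)
  have e2: "Re q - Re S = q1 - (Re S - Re A)" "Im q - Im S = q2 - (Im S - Im A)"
    unfolding q1_def q2_def by simp_all
  note e2 = e2[unfolded S1 S2]
  have ob: "ox^2 + oy^2 = (ox-b1)^2+(oy-b2)^2" using dist_sq[OF d1(1)] unfolding e1 .
  have oc: "(ox-b1)^2+(oy-b2)^2 = (ox-c1)^2+(oy-c2)^2" using dist_sq[OF d1(2)] unfolding e1 .
  have qa: "(q1-b1)^2+(q2-b2)^2 = (q1-c1)^2+(q2-c2)^2" using dist_sq[OF q(1)] unfolding e1 .
  have qb: "(q1-c1)^2+(q2-c2)^2 = (q1-ox)^2+(q2-oy)^2" using dist_sq[OF q(2)] unfolding e1 .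
  have qc: "(q1 - tt*((c1^2+c2^2)*b1+(b1^2+b2^2)*c1))^2+(q2 - tt*((c1^2+c2^2)*b2+(b1^2+b2^2)*c2))^2
            = (q1-b1)^2+(q2-b2)^2" using dist_sq[OF q(3)] unfolding e1 e2 .
  have sd: "cr (c1-b1) (c2-b2) (tt*((c1^2+c2^2)*b1+(b1^2+b2^2)*c1)-b1) (tt*((c1^2+c2^2)*b2+(b1^2+b2^2)*c2)-b2)
              * cr (c1-b1) (c2-b2) (ox-b1) (oy-b2) > 0"
  proof -
    have "Im ((S - B) / (C - B)) * Im ((Oc - B) / (C - B)) > 0" using ss unfolding same_side_def .
    then have P: "(Im (S - B) * Re (C - B) - Re (S - B) * Im (C - B)) * (Im (Oc - B) * Re (C - B) - Re (Oc - B) * Im (C - B)) > 0"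
      unfolding Im_divide by (rule frac_prod_pos)
    have R: "Re (S - B) = (Re S - Re A) - b1" "Im (S - B) = (Im S - Im A) - b2"
      "Re (C - B) = c1 - b1" "Im (C - B) = c2 - b2" "Re (Oc - B) = ox - b1" "Im (Oc - B) = oy - b2"
      unfolding b1_def b2_def c1_def c2_def ox_def oy_def by (simp_all add: algebra_simps)
    note R = R[unfolded S1 S2]
    have cr_alt: "\<And>a1 a2 s1 s2. cr a1 a2 s1 s2 = s2*a1 - s1*a2" unfolding cr_def by (simp add: mult.commute)
    show ?thesis using P unfolding R cr_alt .
  qed
  have tQ: "tt*Q = 1" unfolding Q_def
    by (rule core_S[OF Xn be ob oc qa qb qc sd])
  have hS: "S = A + (B - A) * (C - A) / ((B - A) + (C - A))"
  proof -
    have w: "of_real ((cmod (C - A))^2) * (B - A) + of_real ((cmod (B - A))^2) * (C - A)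
        = (B - A) * (C - A) * (cnj (B - A) + cnj (C - A))"
      unfolding complex_norm_square by (simp add: algebra_simps)
    have "tt = 1 / Q" using tQ Qn by (simp add: field_simps)
    then have t: "complex_of_real tt = 1 / complex_of_real Q" by simp
    have "S - A = (B - A) * (C - A) * (cnj (B - A) + cnj (C - A)) / (((B - A) + (C - A)) * cnj ((B - A) + (C - A)))"
      unfolding Sc w t QQ[symmetric] by simp
    also have "\<dots> = (B - A) * (C - A) / ((B - A) + (C - A))" using cbc bcc by simp
    finally show ?thesis by (simp add: algebra_simps)
  qed

  have E: "(B + C)/2 - A = ((B - A) + (C - A))/2" by (simp add: field_simps)
  have EA0: "cmod ((B + C)/2 - A) \<noteq> 0" unfolding E using bcc by simp
  have ReE: "Re ((B + C)/2 - A) = (b1+c1)/2" "Im ((B + C)/2 - A) = (b2+c2)/2"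
    unfolding b1_def b2_def c1_def c2_def by (simp_all add: field_simps)
  have Qn': "(b1+c1)^2+(b2+c2)^2 \<noteq> 0" using Qn unfolding Q_def .
  obtain lam where Ml: "M = A + of_real lam * ((B + C)/2 - A)" and lQ: "lam*Q = 4*(b1*c1+b2*c2)"
  proof -
    consider (ac) "angle_at B A C < pi/2" | (obt) "angle_at B A C > pi/2" using assms(2) by linarith
    then show ?thesis
    proof cases
      case ac
      from assms(4) ac obtain F where F: "F \<noteq> A" "on_line A ((B+C)/2) F" "on_circle3 A B C F"
        "M \<in> closed_segment A ((B+C)/2)" "dist ((B+C)/2) M = dist ((B+C)/2) F"
        unfolding is_M_A_def Let_def by auto
      obtain r where r: "F = A + of_real r * ((B+C)/2 - A)" using F(2) unfolding on_line_def by blast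
      obtain qq where qq: "dist qq A = dist qq B" "dist qq B = dist qq C" "dist qq F = dist qq A"
        using F(3) unfolding on_circle3_def by blast
      obtain lam where lam: "0 \<le> lam" "lam \<le> 1" "M = (1 - lam) *\<^sub>R A + lam *\<^sub>R ((B+C)/2)"
        using F(4) unfolding closed_segment_def by blast
      have Ml: "M = A + of_real lam * ((B + C)/2 - A)" using lam(3) by (simp add: scaleR_conv_of_real algebra_simps)
      have "(B+C)/2 - M = ((B+C)/2 - A) - of_real lam * ((B + C)/2 - A)" unfolding Ml by simp
      also have "\<dots> = of_real (1 - lam) * ((B + C)/2 - A)" by (simp add: left_diff_distrib)
      finally have eqM: "(B+C)/2 - M = of_real (1 - lam) * ((B + C)/2 - A)" .
      have dM: "dist ((B+C)/2) M = \<bar>1 - lam\<bar> * cmod ((B + C)/2 - A)"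
        by (simp only: dist_norm eqM norm_mult norm_of_real)
      have "(B+C)/2 - F = ((B+C)/2 - A) - of_real r * ((B + C)/2 - A)" unfolding r by simp
      also have "\<dots> = of_real (1 - r) * ((B + C)/2 - A)" by (simp add: left_diff_distrib)
      finally have eqF: "(B+C)/2 - F = of_real (1 - r) * ((B + C)/2 - A)" .
      have dF: "dist ((B+C)/2) F = \<bar>1 - r\<bar> * cmod ((B + C)/2 - A)"
        by (simp only: dist_norm eqF norm_mult norm_of_real)
      have d: "\<bar>1 - lam\<bar> = \<bar>1 - r\<bar>" using F(5) EA0 unfolding dM dF by simp
      have rn: "r \<noteq> 0" using F(1) r by auto
      define q1 where "q1 = Re qq - Re A"
      define q2 where "q2 = Im qq - Im A"
      have e3: "Re qq - Re A = q1" "Im qq - Im A = q2" "Re qq - Re B = q1 - b1" "Im qq - Im B = q2 - b2"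
        "Re qq - Re C = q1 - c1" "Im qq - Im C = q2 - c2"
        unfolding q1_def q2_def b1_def b2_def c1_def c2_def by (simp_all add: algebra_simps)
      have e4: "Re qq - Re F = q1 - r*Re ((B + C)/2 - A)" "Im qq - Im F = q2 - r*Im ((B + C)/2 - A)"
        unfolding r q1_def q2_def by simp_all
      note e4 = e4[unfolded ReE]
      have qb: "q1^2+q2^2 = (q1-b1)^2+(q2-b2)^2" using dist_sq[OF qq(1)] unfolding e3 .
      have qc: "(q1-b1)^2+(q2-b2)^2 = (q1-c1)^2+(q2-c2)^2" using dist_sq[OF qq(2)] unfolding e3 .
      have qF: "(q1 - r*((b1+c1)/2))^2 + (q2 - r*((b2+c2)/2))^2 = q1^2+q2^2"
        using dist_sq[OF qq(3)] unfolding e3 e4 .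
      have "lam*((b1+c1)^2+(b2+c2)^2) = 4*(b1*c1+b2*c2)"
        by (rule core_M_acute[OF Qn' qb qc qF rn d lam(2)])
      then show ?thesis using that Ml unfolding Q_def by blast
    next
      case obt
      then have nac: "\<not> angle_at B A C < pi/2" by simp
      from assms(4) obt nac have F: "M \<noteq> B + C - A" "on_line A ((B+C)/2) M" "on_circle3 (B + C - A) B C M"
        unfolding is_M_A_def Let_def by auto
      obtain lam where Ml: "M = A + of_real lam * ((B+C)/2 - A)" using F(2) unfolding on_line_def by blast
      obtain qq where qq: "dist qq (B + C - A) = dist qq B" "dist qq B = dist qq C" "dist qq M = dist qq (B + C - A)"
        using F(3) unfolding on_circle3_def by blast
      have ln: "lam \<noteq> 2"
      proof
        assume "lam = 2"
        then have "M = B + C - A" unfolding Ml by (simp add: field_simps)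
        then show False using F(1) by simp
      qed
      define q1 where "q1 = Re qq - Re A"
      define q2 where "q2 = Im qq - Im A"
      have e3: "Re qq - Re (B + C - A) = q1 - (b1+c1)" "Im qq - Im (B + C - A) = q2 - (b2+c2)"
        "Re qq - Re B = q1 - b1" "Im qq - Im B = q2 - b2"
        "Re qq - Re C = q1 - c1" "Im qq - Im C = q2 - c2"
        unfolding q1_def q2_def b1_def b2_def c1_def c2_def by (simp_all add: algebra_simps)
      have e4: "Re qq - Re M = q1 - lam*Re ((B + C)/2 - A)" "Im qq - Im M = q2 - lam*Im ((B + C)/2 - A)"
        unfolding Ml q1_def q2_def by simp_all
      note e4 = e4[unfolded ReE]
      have qF: "(q1-(b1+c1))^2+(q2-(b2+c2))^2 = (q1-b1)^2+(q2-b2)^2" using dist_sq[OF qq(1)] unfolding e3 .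
      have qc: "(q1-b1)^2+(q2-b2)^2 = (q1-c1)^2+(q2-c2)^2" using dist_sq[OF qq(2)] unfolding e3 .
      have qM: "(q1 - lam*((b1+c1)/2))^2 + (q2 - lam*((b2+c2)/2))^2 = (q1-(b1+c1))^2+(q2-(b2+c2))^2"
        using dist_sq[OF qq(3)] unfolding e3 e4 .
      have "lam*((b1+c1)^2+(b2+c2)^2) = 4*(b1*c1+b2*c2)"
        by (rule core_M_obtuse[OF Qn' qF qc qM ln])
      then show ?thesis using that Ml unfolding Q_def by blast
    qed
  qed
  have hM: "M = A + (cnj (B - A) * (C - A) + (B - A) * cnj (C - A)) / (cnj (B - A) + cnj (C - A))"
  proof -
    have "lam = 2*(2*(b1*c1+b2*c2)) / Q" using lQ Qn by (simp add: field_simps)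
    then have l: "complex_of_real lam = 2 * (cnj (B - A) * (C - A) + (B - A) * cnj (C - A)) / complex_of_real Q"
      unfolding BE[symmetric] by simp
    have "M - A = 2 * (cnj (B - A) * (C - A) + (B - A) * cnj (C - A)) / (((B - A) + (C - A)) * cnj ((B - A) + (C - A)))
        * (((B - A) + (C - A))/2)" unfolding Ml l E QQ by simp
    also have "\<dots> = (cnj (B - A) * (C - A) + (B - A) * cnj (C - A)) / cnj ((B - A) + (C - A))"
      by (rule gen_half) (use bcc cbc in auto)
    also have "\<dots> = (cnj (B - A) * (C - A) + (B - A) * cnj (C - A)) / (cnj (B - A) + cnj (C - A))"
      by simp
    finally show ?thesis by (simp add: algebra_simps)
  qed
  have be': "cnj (B - A) * (C - A) + (B - A) * cnj (C - A) \<noteq> 0"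
  proof -
    have "complex_of_real (2*(b1*c1+b2*c2)) \<noteq> 0" using be by (simp only: of_real_eq_0_iff) simp
    then show ?thesis unfolding BE .
  qed
  show ?thesis by (rule final_iso[OF b0 c0 bc0 bmc be' hS hM])
qed


end
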